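(* Let $f:\mathbb{R}^n\to\mathbb{R}$ be continuously differentiable, $\varphi:\mathbb{R}^n\to\mathbb{R}$ convex, $\psi=f+\varphi$, $\Lambda$ symmetric positive definite, and suppose $\psi$ can be truncated with sets $\mathbb{R}^n=S_0\supset\cdots\supset S_m$. Let $x^*$ be a stationary point of $\psi$ with $x^*\in S_{i^*}\setminus S_{i^*+1}$ (where $S_{m+1}=\emptyset$). Assume (C.1) $\varphi$ is partly smooth at $x^*$ relative to an affine subspace $\mathcal{M}$ and $B_r(x^* )\cap S_{i^*}=B_r(x^* )\cap\mathcal{M}$ for all $r\in(0,\Gamma(x^* ))$; and (C.3) $-\nabla f(x^* )\in\mathrm{ri}\,\partial\varphi(x^* )$. Then there exists $r_0\in(0,\Gamma(x^* ))$ such that for every $x\in B_{r_0}(x^* )\cap\mathcal{M}$, $$F^{\Lambda}_{\mathrm{nor}}(\tau(x))=\psi'(x;d_s(x))\,d_s(x)=\nabla_{\mathcal{M}}\psi(x).$$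
   Context: $\|\cdot\|$ Euclidean norm, $B_r(x)$ open ball, $\mathrm{ri}$ relative interior. $\psi'(x;d)$ directional derivative, $\partial\psi(x)=\nabla f(x)+\partial\varphi(x)$, stationary means $0\in\partial\psi(x)$; $d_s(x)=\arg\min_{\|d\|\le1}\psi'(x;d)$ if $0\notin\partial\psi(x)$ and $d_s(x)=0$ otherwise. $\mathrm{prox}^{\Lambda}_{\varphi}(z)=\arg\min_y\varphi(y)+\frac12(y-z)^T\Lambda(y-z)$; normal map $F^{\Lambda}_{\mathrm{nor}}(z)=\nabla f(\mathrm{prox}^{\Lambda}_{\varphi}(z))+\Lambda(z-\mathrm{prox}^{\Lambda}_{\varphi}(z))$; $\tau(x)=x+\Lambda^{-1}\mathbf{P}_{\partial\varphi(x)}(-\nabla f(x))$ with $\mathbf{P}_C$ the orthogonal projection onto $C$. For $\|d\|=1$, $\Gamma_{\max}(x,d)=\sup\{T>0: t\mapsto\psi(x+td)\text{ is }C^1\text{ on }(0,T)\}$ and $\Gamma(x)=\inf_{\|d\|=1}\Gamma_{\max}(x,d)$. $\psi$ can be truncated means there are sets $\mathbb{R}^n=S_0\supset\cdots\supset S_m$, $\delta\in(0,\infty]$, $\kappa>0$ and $T:\mathbb{R}^n\times(0,\delta]\to\mathbb{R}^n$ with (i) $\Gamma\ge\delta$ on $S_m$; (ii) for $a\in(0,\delta]$, $x\in S_i\setminus S_{i+1}$, $i<m$: if $\Gamma(x)\ge a$ then $T(x,a)=x$, else $T(x,a)\in S_{i+1}$, $\Gamma(T(x,a))\ge a$, $\|T(x,a)-x\|\le\kappa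 a$. Partial smoothness: a proper convex lsc $\varphi$ is partly smooth at $x$ relative to a set $\mathcal{M}\ni x$ if $\partial\varphi(x)\ne\emptyset$ and (i) $\mathcal{M}$ is a $C^2$-manifold around $x$ and $\varphi|_{\mathcal{M}}$ is $C^2$ around $x$; (ii) the tangent space $T_{\mathcal{M}}(x)$ equals $\mathrm{par}(\partial\varphi(x))^\perp$, where $\mathrm{par}(A)=\mathrm{span}(A-A)$; (iii) $\partial\varphi$ is continuous at $x$ relative to $\mathcal{M}$. For affine $\mathcal{M}$, $T_{\mathcal{M}}$ is its direction space; the Riemannian gradient $\nabla_{\mathcal{M}}\psi(x)$ at $x\in\mathcal{M}$ (where $\psi|_{\mathcal{M}}$ is differentiable) is the unique $v\in T_{\mathcal{M}}$ with $\langle v,\xi\rangle=\frac{d}{dt}\psi(x+t\xi)|_{t=0}$ for all $\xi\in T_{\mathcal{M}}$. *)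

theory Defs
  imports "HOL-Analysis.Analysis"
begin

type_synonym 'n vec = "real ^ 'n"

definition grad :: "('n::finite vec \<Rightarrow> real) \<Rightarrow> 'n vec \<Rightarrow> 'n vec" where
  "grad f x = (THE g. (f has_derivative (\<lambda>h. g \<bullet> h)) (at x))"

definition C1_fun :: "('n::finite vec \<Rightarrow> real) \<Rightarrow> bool" where
  "C1_fun f \<longleftrightarrow> (\<exists>g. continuous_on UNIV g \<and> (\<forall>x. (f has_derivative (\<lambda>h. g x \<bullet> h)) (at x)))"

definition C2_on :: "'n::finite vec set \<Rightarrow> ('n vec \<Rightarrow> real) \<Rightarrow> bool" where
  "C2_on U g \<longleftrightarrow> (\<exists>g1 H. (\<forall>y\<in>U. (g has_derivative (\<lambda>h. g1 y \<bullet> h)) (at y)) \<and>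
      (\<forall>y\<in>U. (g1 has_derivative blinfun_apply (H y)) (at y)) \<and> continuous_on U H)"

definition subdiff :: "('n::finite vec \<Rightarrow> real) \<Rightarrow> 'n vec \<Rightarrow> 'n vec set" where
  "subdiff phi x = {v. \<forall>y. phi y \<ge> phi x + v \<bullet> (y - x)}"

definition subdiff_psi :: "('n::finite vec \<Rightarrow> real) \<Rightarrow> ('n vec \<Rightarrow> real) \<Rightarrow> 'n vec \<Rightarrow> 'n vec set" where
  "subdiff_psi f phi x = (\<lambda>v. grad f x + v) ` subdiff phi x"

definition stationary :: "('n::finite vec \<Rightarrow> real) \<Rightarrow> ('n vec \<Rightarrow> real) \<Rightarrow> 'n vec \<Rightarrow> bool" where
  "stationary f phi x \<longleftrightarrow> 0 \<in> subdiff_psi f phi x"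

definition dirderiv :: "('n::finite vec \<Rightarrow> real) \<Rightarrow> 'n vec \<Rightarrow> 'n vec \<Rightarrow> real" where
  "dirderiv psi x d = Lim (at_right (0::real)) (\<lambda>t. (psi (x + t *\<^sub>R d) - psi x) / t)"

definition steepest_dir :: "('n::finite vec \<Rightarrow> real) \<Rightarrow> ('n vec \<Rightarrow> real) \<Rightarrow> 'n vec \<Rightarrow> 'n vec" where
  "steepest_dir f phi x =
     (if 0 \<notin> subdiff_psi f phi x then
        (SOME d. norm d \<le> 1 \<and> (\<forall>e. norm e \<le> 1 \<longrightarrow>
            dirderiv (\<lambda>y. f y + phi y) x d \<le> dirderiv (\<lambda>y. f y + phi y) x e))
      else 0)"

definition prox :: "real^'n^'n \<Rightarrow> ('n::finite vec \<Rightarrow> real) \<Rightarrow> 'n vec \<Rightarrow> 'n vec" where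
  "prox Lam phi z = (SOME y. \<forall>w. phi y + (1/2) * ((y - z) \<bullet> (Lam *v (y - z)))
                               \<le> phi w + (1/2) * ((w - z) \<bullet> (Lam *v (w - z))))"

definition normal_map :: "real^'n^'n \<Rightarrow> ('n::finite vec \<Rightarrow> real) \<Rightarrow> ('n vec \<Rightarrow> real) \<Rightarrow> 'n vec \<Rightarrow> 'n vec" where
  "normal_map Lam f phi z = grad f (prox Lam phi z) + Lam *v (z - prox Lam phi z)"

definition tau :: "real^'n^'n \<Rightarrow> ('n::finite vec \<Rightarrow> real) \<Rightarrow> ('n vec \<Rightarrow> real) \<Rightarrow> 'n vec \<Rightarrow> 'n vec" where
  "tau Lam f phi x = x + matrix_inv Lam *v closest_point (subdiff phi x) (- grad f x)"

text \<open>Gamma_max(x,d) and Gamma(x), valued in the extended reals (sup may be infinite).\<close>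
definition Gamma_max :: "('n::finite vec \<Rightarrow> real) \<Rightarrow> 'n vec \<Rightarrow> 'n vec \<Rightarrow> ereal" where
  "Gamma_max psi x d = Sup (ereal ` {T. T > 0 \<and>
      (\<exists>g'. continuous_on {0<..<T} g' \<and>
            (\<forall>t\<in>{0<..<T}. ((\<lambda>s. psi (x + s *\<^sub>R d)) has_real_derivative g' t) (at t)))})"

definition Gamma :: "('n::finite vec \<Rightarrow> real) \<Rightarrow> 'n vec \<Rightarrow> ereal" where
  "Gamma psi x = Inf (Gamma_max psi x ` {d. norm d = 1})"

definition truncatable ::
  "('n::finite vec \<Rightarrow> real) \<Rightarrow> (nat \<Rightarrow> 'n vec set) \<Rightarrow> nat \<Rightarrow> ereal \<Rightarrow> real
     \<Rightarrow> ('n vec \<Rightarrow> real \<Rightarrow> 'n vec) \<Rightarrow> bool" where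
  "truncatable psi S m \<delta> \<kappa> T \<longleftrightarrow>
     S 0 = UNIV \<and> (\<forall>i<m. S (Suc i) \<subseteq> S i) \<and> \<delta> > 0 \<and> \<kappa> > 0 \<and>
     (\<forall>x\<in>S m. Gamma psi x \<ge> \<delta>) \<and>
     (\<forall>a i x. a > 0 \<and> ereal a \<le> \<delta> \<and> i < m \<and> x \<in> S i - S (Suc i) \<longrightarrow>
        (if Gamma psi x \<ge> ereal a then T x a = x
         else T x a \<in> S (Suc i) \<and> Gamma psi (T x a) \<ge> ereal a \<and> norm (T x a - x) \<le> \<kappa> * a))"

definition aff_dir :: "'n::finite vec set \<Rightarrow> 'n vec set" where
  "aff_dir M = {y - z | y z. y \<in> M \<and> z \<in> M}"

definition par :: "'n::finite vec set \<Rightarrow> 'n vec set" where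
  "par A = span {a - b | a b. a \<in> A \<and> b \<in> A}"

definition orth_comp :: "'n::finite vec set \<Rightarrow> 'n vec set" where
  "orth_comp A = {v. \<forall>w\<in>A. v \<bullet> w = 0}"

text \<open>Continuity (Painleve-Kuratowski: outer and inner semicontinuity) of the
  subdifferential at x relative to M.\<close>
definition subdiff_cont_rel :: "('n::finite vec \<Rightarrow> real) \<Rightarrow> 'n vec set \<Rightarrow> 'n vec \<Rightarrow> bool" where
  "subdiff_cont_rel phi M x \<longleftrightarrow>
     (\<forall>xk vk v. (\<forall>k. xk k \<in> M) \<and> xk \<longlonglongrightarrow> x \<and> (\<forall>k. vk k \<in> subdiff phi (xk k)) \<and> vk \<longlonglongrightarrow> v
        \<longrightarrow> v \<in> subdiff phi x) \<and>
     (\<forall>xk. (\<forall>k. xk k \<in> M) \<and> xk \<longlonglongrightarrow> x \<longrightarrow>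
        (\<forall>v\<in>subdiff phi x. \<exists>vk. (\<forall>k. vk k \<in> subdiff phi (xk k)) \<and> vk \<longlonglongrightarrow> v))"

text \<open>Partial smoothness of phi at x relative to an affine set M (an affine set is
  automatically a C^2 manifold; its tangent space is its direction space).
  phi restricted to M is C^2 around x: it agrees near x on M with a C^2 function.\<close>
definition partly_smooth_affine :: "('n::finite vec \<Rightarrow> real) \<Rightarrow> 'n vec \<Rightarrow> 'n vec set \<Rightarrow> bool" where
  "partly_smooth_affine phi x M \<longleftrightarrow>
     affine M \<and> x \<in> M \<and> subdiff phi x \<noteq> {} \<and>
     (\<exists>U g. open U \<and> x \<in> U \<and> C2_on U g \<and> (\<forall>y\<in>U \<inter> M. phi y = g y)) \<and>
     aff_dir M = orth_comp (par (subdiff phi x)) \<and>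
     subdiff_cont_rel phi M x"

definition riem_grad :: "('n::finite vec \<Rightarrow> real) \<Rightarrow> 'n vec set \<Rightarrow> 'n vec \<Rightarrow> 'n vec" where
  "riem_grad psi M x = (THE v. v \<in> aff_dir M \<and>
      (\<forall>\<xi>\<in>aff_dir M. ((\<lambda>t. psi (x + t *\<^sub>R \<xi>)) has_real_derivative (v \<bullet> \<xi>)) (at 0)))"

end

theory Submission
  imports Defs
begin


lemma conv_line:
  fixes phi :: "'n::finite vec \<Rightarrow> real"
  assumes "convex_on UNIV phi"
  shows "convex_on UNIV (\<lambda>t::real. phi (p + t *\<^sub>R e))"
  unfolding convex_on_def
proof (intro conjI ballI allI impI)
  fix x y u v :: real assume uv: "0 \<le> u" "0 \<le> v" "u + v = 1"
  have "p + (u *\<^sub>R x + v *\<^sub>R y) *\<^sub>R e = u *\<^sub>R (p + x *\<^sub>R e) + v *\<^sub>R (p + y *\<^sub>R e)"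
  proof -
    have "p = u *\<^sub>R p + v *\<^sub>R p" using uv(3) by (metis scaleR_add_left scaleR_one)
    then show ?thesis by (simp add: algebra_simps)
  qed
  then show "phi (p + (u *\<^sub>R x + v *\<^sub>R y) *\<^sub>R e) \<le> u * phi (p + x *\<^sub>R e) + v * phi (p + y *\<^sub>R e)"
    using assms uv unfolding convex_on_def by auto
qed simp

definition rdd :: "('n::finite vec \<Rightarrow> real) \<Rightarrow> 'n vec \<Rightarrow> 'n vec \<Rightarrow> real" where
  "rdd phi p e = Inf ((\<lambda>t. (phi (p + t *\<^sub>R e) - phi p) / t) ` {0<..})"

lemma quot_mono:
  fixes phi :: "'n::finite vec \<Rightarrow> real"
  assumes "convex_on UNIV phi" "0 < s" "s \<le> t"
  shows "(phi (p + s *\<^sub>R e) - phi p) / s \<le> (phi (p + t *\<^sub>R e) - phi p) / t"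
proof (cases "s = t")
  case False
  then have st: "s < t" using assms by auto
  have "((\<lambda>t. phi (p + t *\<^sub>R e)) 0 - (\<lambda>t. phi (p + t *\<^sub>R e)) s) / (0 - s)
        \<le> ((\<lambda>t. phi (p + t *\<^sub>R e)) 0 - (\<lambda>t. phi (p + t *\<^sub>R e)) t) / (0 - t)"
    by (rule convex_on_slope_le(1)[OF conv_line[OF assms(1)]]) (use assms st in auto)
  moreover have "(phi (p + 0 *\<^sub>R e) - phi (p + s *\<^sub>R e)) / (0 - s) = (phi (p + s *\<^sub>R e) - phi p) / s"
    using assms by (simp add: field_simps)
  moreover have "(phi (p + 0 *\<^sub>R e) - phi (p + t *\<^sub>R e)) / (0 - t) = (phi (p + t *\<^sub>R e) - phi p) / t"
    using assms st by (simp add: field_simps)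
  ultimately show ?thesis by simp
qed simp

lemma quot_lb:
  fixes phi :: "'n::finite vec \<Rightarrow> real"
  assumes "convex_on UNIV phi" "0 < t"
  shows "phi p - phi (p - e) \<le> (phi (p + t *\<^sub>R e) - phi p) / t"
proof -
  note cl = conv_line[OF assms(1), of p e]
  have H1: "((\<lambda>t. phi (p + t *\<^sub>R e)) (-1) - (\<lambda>t. phi (p + t *\<^sub>R e)) 0) / (-1 - 0)
        \<le> ((\<lambda>t. phi (p + t *\<^sub>R e)) (-1) - (\<lambda>t. phi (p + t *\<^sub>R e)) t) / (-1 - t)"
    by (rule convex_on_slope_le(1)[OF cl]) (use assms in auto)
  have H2: "((\<lambda>t. phi (p + t *\<^sub>R e)) (-1) - (\<lambda>t. phi (p + t *\<^sub>R e)) t) / (-1 - t)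
        \<le> ((\<lambda>t. phi (p + t *\<^sub>R e)) 0 - (\<lambda>t. phi (p + t *\<^sub>R e)) t) / (0 - t)"
    by (rule convex_on_slope_le(2)[OF cl]) (use assms in auto)
  have E1: "((\<lambda>t. phi (p + t *\<^sub>R e)) (-1) - (\<lambda>t. phi (p + t *\<^sub>R e)) 0) / (-1 - 0) = phi p - phi (p - e)"
    by simp
  have E2: "((\<lambda>t. phi (p + t *\<^sub>R e)) 0 - (\<lambda>t. phi (p + t *\<^sub>R e)) t) / (0 - t) = (phi (p + t *\<^sub>R e) - phi p) / t"
    using assms by (simp add: field_simps)
  show ?thesis using H1 H2 unfolding E1 E2 by linarith
qed

lemma rdd_tendsto:
  fixes phi :: "'n::finite vec \<Rightarrow> real"
  assumes cv: "convex_on UNIV phi"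
  shows "((\<lambda>t. (phi (p + t *\<^sub>R e) - phi p) / t) \<longlongrightarrow> rdd phi p e) (at_right 0)"
    and "\<And>t. 0 < t \<Longrightarrow> rdd phi p e \<le> (phi (p + t *\<^sub>R e) - phi p) / t"
    and "phi p - phi (p - e) \<le> rdd phi p e"
proof -
  let ?q = "\<lambda>t. (phi (p + t *\<^sub>R e) - phi p) / t"
  have bdd: "bdd_below (?q ` {0<..})"
    using quot_lb[OF cv] by (auto intro!: bdd_belowI[where m="phi p - phi (p - e)"])
  show lower: "\<And>t. 0 < t \<Longrightarrow> rdd phi p e \<le> ?q t"
    unfolding rdd_def by (rule cInf_lower[OF _ bdd]) auto
  show "phi p - phi (p - e) \<le> rdd phi p e"
    unfolding rdd_def by (rule cInf_greatest) (auto intro: quot_lb[OF cv])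
  show "(?q \<longlongrightarrow> rdd phi p e) (at_right 0)"
  proof (rule order_tendstoI)
    fix a assume "a < rdd phi p e"
    show "eventually (\<lambda>t. a < ?q t) (at_right 0)"
    proof (rule eventually_at_rightI[of 0 1])
      fix t :: real assume "t \<in> {0<..<1}"
      then show "a < ?q t" using lower[of t] \<open>a < rdd phi p e\<close> by auto
    qed simp
  next
    fix a assume "rdd phi p e < a"
    then obtain t0 where t0: "t0 > 0" "?q t0 < a"
      unfolding rdd_def by (subst (asm) cInf_less_iff[OF _ bdd]) auto
    show "eventually (\<lambda>t. ?q t < a) (at_right 0)"
    proof (rule eventually_at_rightI[of 0 t0])
      fix t :: real assume "t \<in> {0<..<t0}"
      then show "?q t < a" using quot_mono[OF cv, of t t0 p e] t0 by auto
    qed (use t0 in simp)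
  qed
qed

lemma rdd_subgrad:
  fixes phi :: "'n::finite vec \<Rightarrow> real"
  assumes "w \<in> subdiff phi p"
  shows "w \<bullet> e \<le> rdd phi p e"
  unfolding rdd_def
proof (rule cInf_greatest)
  fix y assume "y \<in> (\<lambda>t. (phi (p + t *\<^sub>R e) - phi p) / t) ` {0<..}"
  then obtain t where t: "t > 0" "y = (phi (p + t *\<^sub>R e) - phi p) / t" by auto
  have "phi (p + t *\<^sub>R e) \<ge> phi p + w \<bullet> (p + t *\<^sub>R e - p)"
    using assms unfolding subdiff_def by blast
  then have "t * (w \<bullet> e) \<le> phi (p + t *\<^sub>R e) - phi p" by simp
  then show "w \<bullet> e \<le> y" using t by (simp add: pos_le_divide_eq mult.commute)
qed auto

lemma rdd_convex:
  fixes phi :: "'n::finite vec \<Rightarrow> real"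
  assumes cv: "convex_on UNIV phi"
  shows "convex_on UNIV (rdd phi p)"
  unfolding convex_on_def
proof (intro conjI ballI allI impI)
  fix a b :: "'n vec" and u v :: real assume uv: "0 \<le> u" "0 \<le> v" "u + v = 1"
  let ?q = "\<lambda>e t. (phi (p + t *\<^sub>R e) - phi p) / t"
  have "((\<lambda>t. u * ?q a t + v * ?q b t) \<longlongrightarrow> u * rdd phi p a + v * rdd phi p b) (at_right 0)"
    by (intro tendsto_intros rdd_tendsto(1)[OF cv])
  moreover have "eventually (\<lambda>t. ?q (u *\<^sub>R a + v *\<^sub>R b) t \<le> u * ?q a t + v * ?q b t) (at_right 0)"
  proof (rule eventually_at_rightI[of 0 1])
    fix t :: real assume t: "t \<in> {0<..<1}"
    have pe: "p = u *\<^sub>R p + v *\<^sub>R p" using uv(3) by (metis scaleR_add_left scaleR_one)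
    have "p + t *\<^sub>R (u *\<^sub>R a + v *\<^sub>R b) = u *\<^sub>R (p + t *\<^sub>R a) + v *\<^sub>R (p + t *\<^sub>R b)"
      by (subst pe) (simp add: algebra_simps)
    then have "phi (p + t *\<^sub>R (u *\<^sub>R a + v *\<^sub>R b)) \<le> u * phi (p + t *\<^sub>R a) + v * phi (p + t *\<^sub>R b)"
      using cv uv unfolding convex_on_def by auto
    moreover have "phi p = u * phi p + v * phi p" using uv(3) by (metis distrib_right mult_1)
    ultimately have "phi (p + t *\<^sub>R (u *\<^sub>R a + v *\<^sub>R b)) - phi p
        \<le> u * (phi (p + t *\<^sub>R a) - phi p) + v * (phi (p + t *\<^sub>R b) - phi p)"
      by (simp add: algebra_simps)
    then have "?q (u *\<^sub>R a + v *\<^sub>R b) t \<le> (u * (phi (p + t *\<^sub>R a) - phi p) + v * (phi (p + t *\<^sub>R b) - phi p)) / t"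
      using t by (simp add: divide_right_mono)
    also have "\<dots> = u * ?q a t + v * ?q b t"
      by (simp add: add_divide_distrib)
    finally show "?q (u *\<^sub>R a + v *\<^sub>R b) t \<le> u * ?q a t + v * ?q b t" .
  qed simp
  ultimately show "rdd phi p (u *\<^sub>R a + v *\<^sub>R b) \<le> u * rdd phi p a + v * rdd phi p b"
    using tendsto_le[OF trivial_limit_at_right_real] rdd_tendsto(1)[OF cv] by blast
qed simp

lemma rdd_cont:
  fixes phi :: "'n::finite vec \<Rightarrow> real"
  assumes cv: "convex_on UNIV phi"
  shows "isCont (rdd phi p) e"
  using convex_on_continuous[OF open_UNIV rdd_convex[OF cv]]
  by (simp add: continuous_on_eq_continuous_at)

lemma rdd_of_deriv:
  fixes phi :: "'n::finite vec \<Rightarrow> real"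
  assumes cv: "convex_on UNIV phi"
    and D: "((\<lambda>t. phi (p + t *\<^sub>R e)) has_real_derivative D) (at 0)"
  shows "rdd phi p e = D" "rdd phi p (-e) = -D"
proof -
  have L: "((\<lambda>y. (phi (p + y *\<^sub>R e) - phi p) / y) \<longlongrightarrow> D) (at 0)"
    using D unfolding has_field_derivative_iff by simp
  have LR: "((\<lambda>y. (phi (p + y *\<^sub>R e) - phi p) / y) \<longlongrightarrow> D) (at_right 0)"
    and LL: "((\<lambda>y. (phi (p + y *\<^sub>R e) - phi p) / y) \<longlongrightarrow> D) (at_left 0)"
    using L filterlim_at_split by auto
  show "rdd phi p e = D"
    by (rule tendsto_unique[OF trivial_limit_at_right_real rdd_tendsto(1)[OF cv] LR])
  have "((\<lambda>y. (phi (p + (-y) *\<^sub>R e) - phi p) / (-y)) \<longlongrightarrow> D) (at_right 0)"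
    using LL unfolding filterlim_at_left_to_right[of _ _ 0] by simp
  then have T2: "((\<lambda>y. - ((phi (p + (-y) *\<^sub>R e) - phi p) / (-y))) \<longlongrightarrow> -D) (at_right 0)"
    by (rule tendsto_minus)
  have E2: "(\<lambda>y. - ((phi (p + (-y) *\<^sub>R e) - phi p) / (-y))) = (\<lambda>y. (phi (p + y *\<^sub>R (-e)) - phi p) / y)"
    by (rule ext) (simp add: divide_simps)
  show "rdd phi p (-e) = -D"
    using T2 unfolding E2 by (rule tendsto_unique[OF trivial_limit_at_right_real rdd_tendsto(1)[OF cv]])
qed

lemma deriv_of_rdd:
  fixes phi :: "'n::finite vec \<Rightarrow> real"
  assumes cv: "convex_on UNIV phi"
    and Z: "rdd phi p e + rdd phi p (-e) = 0"
  shows "((\<lambda>t. phi (p + t *\<^sub>R e)) has_real_derivative rdd phi p e) (at 0)"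
  unfolding has_field_derivative_iff
proof -
  have R: "((\<lambda>y. (phi (p + y *\<^sub>R e) - phi p) / y) \<longlongrightarrow> rdd phi p e) (at_right 0)"
    by (rule rdd_tendsto(1)[OF cv])
  have m1: "- rdd phi p (-e) = rdd phi p e" using Z by linarith
  have T1: "((\<lambda>y. - ((phi (p + y *\<^sub>R (-e)) - phi p) / y)) \<longlongrightarrow> rdd phi p e) (at_right 0)"
    using tendsto_minus[OF rdd_tendsto(1)[OF cv, of p "-e"]] unfolding m1 .
  have E: "(\<lambda>y. - ((phi (p + y *\<^sub>R (-e)) - phi p) / y)) = (\<lambda>y. (phi (p + (-y) *\<^sub>R e) - phi p) / (-y))"
    by (rule ext) (simp add: divide_simps)
  have "((\<lambda>y. (phi (p + (-y) *\<^sub>R e) - phi p) / (-y)) \<longlongrightarrow> rdd phi p e) (at_right 0)"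
    using T1 unfolding E .
  then have Lf: "((\<lambda>y. (phi (p + y *\<^sub>R e) - phi p) / y) \<longlongrightarrow> rdd phi p e) (at_left 0)"
    unfolding filterlim_at_left_to_right[of _ _ 0] by simp
  have "((\<lambda>y. (phi (p + y *\<^sub>R e) - phi p) / y) \<longlongrightarrow> rdd phi p e) (at 0)"
    using R Lf filterlim_at_split by blast
  then show "((\<lambda>y. (phi (p + y *\<^sub>R e) - phi (p + 0 *\<^sub>R e)) / (y - 0)) \<longlongrightarrow> rdd phi p e) (at 0)"
    by simp
qed

lemma convex_deriv_cont:
  fixes h h' :: "real \<Rightarrow> real"
  assumes cv: "convex_on UNIV h" and I: "open I"
    and D: "\<And>s. s \<in> I \<Longrightarrow> (h has_real_derivative h' s) (at s)"
  shows "continuous_on I h'"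
proof (rule continuous_at_imp_continuous_on, intro ballI)
  fix s assume sI: "s \<in> I"
  have tang: "h x - h c \<ge> h' c * (x - c)" if "c \<in> I" for x c
    using convex_on_imp_above_tangent[OF cv connected_UNIV, of c x "h' c"] D[OF that] by simp
  define D1 where "D1 = (\<lambda>\<tau>. (h (s + \<tau>) - h s) / \<tau>)"
  define D2 where "D2 = (\<lambda>\<tau>. (h (s + 2 * \<tau>) - h (s + \<tau>)) / \<tau>)"
  have L1: "(D1 \<longlongrightarrow> h' s) (at 0)"
    using D[OF sI] unfolding DERIV_def D1_def .
  have "((\<lambda>\<tau>. h (s + 2 * \<tau>)) has_real_derivative h' s * 2) (at 0)"
  proof -
    have "((\<lambda>\<tau>. s + 2 * \<tau>) has_real_derivative 2) (at 0)"
      by (auto intro!: derivative_eq_intros)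
    moreover have "(h has_real_derivative h' s) (at (s + 2 * 0))" using D[OF sI] by simp
    ultimately show ?thesis
      using DERIV_chain2[of h "h' s" "\<lambda>\<tau>. s + 2 * \<tau>" 0 2 UNIV] by simp
  qed
  then have "((\<lambda>\<tau>. (h (s + 2 * \<tau>) - h s) / \<tau>) \<longlongrightarrow> h' s * 2) (at 0)"
    unfolding DERIV_def by simp
  then have "((\<lambda>\<tau>. (h (s + 2 * \<tau>) - h s) / \<tau> - D1 \<tau>) \<longlongrightarrow> h' s * 2 - h' s) (at 0)"
    using L1 by (intro tendsto_diff)
  moreover have "(\<lambda>\<tau>. (h (s + 2 * \<tau>) - h s) / \<tau> - D1 \<tau>) = D2"
    unfolding D1_def D2_def by (rule ext) (simp add: diff_divide_distrib)
  ultimately have L2: "(D2 \<longlongrightarrow> h' s) (at 0)" by simp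
  obtain r where r: "r > 0" "ball s r \<subseteq> I" using I sI open_contains_ball by blast
  have ev: "eventually (\<lambda>\<tau>. s + \<tau> \<in> I \<and> \<tau> \<noteq> 0) (at 0)"
    unfolding eventually_at
    by (rule exI[of _ r]) (use r in \<open>auto simp: dist_real_def\<close>)
  have B: "min (D1 \<tau>) (D2 \<tau>) \<le> h' (s + \<tau>) \<and> h' (s + \<tau>) \<le> max (D1 \<tau>) (D2 \<tau>)"
    if "s + \<tau> \<in> I" "\<tau> \<noteq> 0" for \<tau>
  proof -
    have a: "h s - h (s + \<tau>) \<ge> h' (s + \<tau>) * (s - (s + \<tau>))" by (rule tang[OF that(1)])
    have b: "h (s + 2 * \<tau>) - h (s + \<tau>) \<ge> h' (s + \<tau>) * (s + 2 * \<tau> - (s + \<tau>))" by (rule tang[OF that(1)])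
    show ?thesis
    proof (cases "\<tau> > 0")
      case True
      have "D1 \<tau> \<le> h' (s + \<tau>)" unfolding D1_def using a True by (simp add: divide_le_eq algebra_simps)
      moreover have "h' (s + \<tau>) \<le> D2 \<tau>" unfolding D2_def using b True by (simp add: le_divide_eq algebra_simps)
      ultimately show ?thesis by linarith
    next
      case False
      then have T: "\<tau> < 0" using that(2) by linarith
      have "h' (s + \<tau>) \<le> D1 \<tau>" unfolding D1_def using a T by (simp add: le_divide_eq algebra_simps)
      moreover have "D2 \<tau> \<le> h' (s + \<tau>)" unfolding D2_def using b T by (simp add: divide_le_eq algebra_simps)
      ultimately show ?thesis by linarith
    qed
  qed
  have "((\<lambda>\<tau>. h' (s + \<tau>)) \<longlongrightarrow> h' s) (at 0)"
  proof (rule tendsto_sandwich[of "\<lambda>\<tau>. min (D1 \<tau>) (D2 \<tau>)" _ _ "\<lambda>\<tau>. max (D1 \<tau>) (D2 \<tau>)"])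
    show "eventually (\<lambda>\<tau>. min (D1 \<tau>) (D2 \<tau>) \<le> h' (s + \<tau>)) (at 0)"
      using ev by eventually_elim (use B in blast)
    show "eventually (\<lambda>\<tau>. h' (s + \<tau>) \<le> max (D1 \<tau>) (D2 \<tau>)) (at 0)"
      using ev by eventually_elim (use B in blast)
    show "((\<lambda>\<tau>. min (D1 \<tau>) (D2 \<tau>)) \<longlongrightarrow> h' s) (at 0)"
      using tendsto_min[OF L1 L2] by simp
    show "((\<lambda>\<tau>. max (D1 \<tau>) (D2 \<tau>)) \<longlongrightarrow> h' s) (at 0)"
      using tendsto_max[OF L1 L2] by simp
  qed
  then show "isCont h' s"
    unfolding isCont_def by (rule LIM_offset_zero_cancel)
qed

lemma f_line_deriv:
  fixes f :: "real^'n \<Rightarrow> real"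
  assumes "\<And>x. (f has_derivative (\<lambda>h. G x \<bullet> h)) (at x)"
  shows "((\<lambda>s. f (y + s *\<^sub>R e)) has_real_derivative (G (y + s0 *\<^sub>R e) \<bullet> e)) (at s0)"
proof -
  have l: "((\<lambda>s. y + s *\<^sub>R e) has_derivative (\<lambda>h. h *\<^sub>R e)) (at s0)"
    by (auto intro!: derivative_eq_intros)
  have "((\<lambda>s. f (y + s *\<^sub>R e)) has_derivative (\<lambda>h. G (y + s0 *\<^sub>R e) \<bullet> (h *\<^sub>R e))) (at s0)"
    by (rule has_derivative_compose[OF l assms])
  moreover have "(\<lambda>h. G (y + s0 *\<^sub>R e) \<bullet> (h *\<^sub>R e)) = (*) (G (y + s0 *\<^sub>R e) \<bullet> e)"
    by (rule ext) simp
  ultimately show ?thesis unfolding has_field_derivative_def by simp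
qed

lemma gamma_pos_from_near:
  fixes f phi :: "real^'n \<Rightarrow> real"
  assumes Gd: "\<And>x. (f has_derivative (\<lambda>h. G x \<bullet> h)) (at x)" and Gc: "continuous_on UNIV G"
    and cv: "convex_on UNIV phi" and c: "c > 0"
    and near: "\<And>\<epsilon>. \<epsilon> > 0 \<Longrightarrow> \<exists>u. dist u x < \<epsilon> \<and> ereal c \<le> Gamma (\<lambda>y. f y + phi y) u"
  shows "ereal (c/2) \<le> Gamma (\<lambda>y. f y + phi y) x"
  unfolding Gamma_def
proof (rule INF_greatest)
  fix d :: "real^'n" assume "d \<in> {d. norm d = 1}"
  then have nd: "norm d = 1" by simp
  let ?psi = "\<lambda>y. f y + phi y"
  have K1: "rdd phi (x + s0 *\<^sub>R d) d + rdd phi (x + s0 *\<^sub>R d) (-d) = 0" if s0: "0 < s0" "s0 < c/2" for s0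
  proof (rule ccontr)
    define p where "p = x + s0 *\<^sub>R d"
    define F where "F = (\<lambda>e. rdd phi p e + rdd phi p (-e))"
    assume "rdd phi (x + s0 *\<^sub>R d) d + rdd phi (x + s0 *\<^sub>R d) (-d) \<noteq> 0"
    then have Fd: "F d \<noteq> 0" unfolding F_def p_def .
    have "isCont F d" unfolding F_def
      by (intro continuous_intros rdd_cont[OF cv] isCont_o2[OF _ rdd_cont[OF cv]]) 
    then obtain \<delta> where \<delta>: "\<delta> > 0" "\<And>e. e \<noteq> d \<Longrightarrow> norm (e - d) < \<delta> \<Longrightarrow> norm (F e - F d) < \<bar>F d\<bar>"
      unfolding isCont_def LIM_eq using Fd by (metis zero_less_abs_iff)
    define \<eta> where "\<eta> = min (s0/2) (\<delta> * s0 / 4)"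
    have \<eta>: "\<eta> > 0" using s0 \<delta> by (simp add: \<eta>_def)
    obtain u where u: "dist u x < \<eta>" "ereal c \<le> Gamma ?psi u" using near[OF \<eta>] by blast
    define v where "v = p - u"
    define t0 where "t0 = norm v"
    have xu: "norm (x - u) < \<eta>" using u(1) by (simp add: dist_norm norm_minus_commute)
    have vs: "v - s0 *\<^sub>R d = x - u" unfolding v_def p_def by simp
    have "\<bar>t0 - s0\<bar> \<le> norm (v - s0 *\<^sub>R d)"
      unfolding t0_def using norm_triangle_ineq3[of v "s0 *\<^sub>R d"] nd s0 by simp
    then have ts: "\<bar>t0 - s0\<bar> < \<eta>" using xu vs by simp
    have "\<eta> \<le> s0/2" unfolding \<eta>_def by simp
    then have t0pos: "t0 > s0/2" using ts unfolding abs_less_iff by linarith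
    have t0c: "t0 < c" using ts \<open>\<eta> \<le> s0/2\<close> s0 unfolding abs_less_iff by linarith
    define e where "e = (1/t0) *\<^sub>R v"
    have ne: "norm e = 1" unfolding e_def t0_def using t0pos s0 t0_def by auto
    have t0p: "t0 > 0" using t0pos s0 by linarith
    have te: "t0 *\<^sub>R e = v" unfolding e_def using t0p by simp
    have "norm (v - t0 *\<^sub>R d) \<le> norm (v - s0 *\<^sub>R d) + norm ((s0 - t0) *\<^sub>R d)"
    proof -
      have "v - t0 *\<^sub>R d = (v - s0 *\<^sub>R d) + (s0 - t0) *\<^sub>R d" by (simp add: algebra_simps)
      then show ?thesis by (metis norm_triangle_ineq)
    qed
    also have "\<dots> \<le> norm (x - u) + \<bar>t0 - s0\<bar>" using vs nd by simp
    also have "\<dots> < 2 * \<eta>" using xu ts by simp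
    finally have nv: "norm (v - t0 *\<^sub>R d) < 2 * \<eta>" .
    have "e - d = (1/t0) *\<^sub>R (v - t0 *\<^sub>R d)" unfolding e_def using t0p by (simp add: algebra_simps)
    then have "norm (e - d) = norm (v - t0 *\<^sub>R d) / t0" using t0p by simp
    also have "\<dots> < 2 * \<eta> / t0" using nv t0p by (simp add: divide_strict_right_mono)
    also have "\<dots> \<le> 2 * \<eta> / (s0/2)" using t0pos t0p \<eta> s0 by (intro divide_left_mono) auto
    also have "\<dots> \<le> \<delta>" using s0 \<delta> unfolding \<eta>_def by (simp add: field_simps min_def)
    finally have ed: "norm (e - d) < \<delta>" .
    have "Gamma ?psi u \<le> Gamma_max ?psi u e" unfolding Gamma_def by (rule INF_lower) (simp add: ne)
    moreover have "ereal t0 < ereal c" using t0c by simp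
    ultimately have "ereal t0 < Gamma_max ?psi u e" using u(2) by (meson order.trans less_le_trans)
    then obtain T g' where T: "t0 < T" "\<forall>t\<in>{0<..<T}. ((\<lambda>s. ?psi (u + s *\<^sub>R e)) has_real_derivative g' t) (at t)"
      unfolding Gamma_max_def less_Sup_iff by auto
    have "((\<lambda>s. ?psi (u + s *\<^sub>R e)) has_real_derivative g' t0) (at t0)" using T t0pos s0 by auto
    from DERIV_diff[OF this f_line_deriv[OF Gd, of u e t0]]
    have "((\<lambda>s. phi (u + s *\<^sub>R e)) has_real_derivative (g' t0 - G (u + t0 *\<^sub>R e) \<bullet> e)) (at t0)"
      by simp
    then have "((\<lambda>t. phi (u + (t + t0) *\<^sub>R e)) has_real_derivative (g' t0 - G (u + t0 *\<^sub>R e) \<bullet> e)) (at 0)"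
      using DERIV_shift[of "\<lambda>s. phi (u + s *\<^sub>R e)" _ 0 t0] by simp
    moreover have "(\<lambda>t. phi (u + (t + t0) *\<^sub>R e)) = (\<lambda>t. phi (p + t *\<^sub>R e))"
      by (rule ext) (simp add: scaleR_add_left te v_def algebra_simps)
    ultimately have "((\<lambda>t. phi (p + t *\<^sub>R e)) has_real_derivative (g' t0 - G (u + t0 *\<^sub>R e) \<bullet> e)) (at 0)"
      by simp
    from rdd_of_deriv[OF cv this] have Fe: "F e = 0" unfolding F_def by simp
    show False
    proof (cases "e = d")
      case True then show False using Fe Fd by simp
    next
      case False then show False using \<delta>(2)[OF False ed] Fe by simp
    qed
  qed
  define g' where "g' = (\<lambda>s. G (x + s *\<^sub>R d) \<bullet> d + rdd phi (x + s *\<^sub>R d) d)"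
  have Dphi: "((\<lambda>s. phi (x + s *\<^sub>R d)) has_real_derivative rdd phi (x + s *\<^sub>R d) d) (at s)"
    if "s \<in> {0<..<c/2}" for s
  proof -
    have "((\<lambda>t. phi ((x + s *\<^sub>R d) + t *\<^sub>R d)) has_real_derivative rdd phi (x + s *\<^sub>R d) d) (at 0)"
      using deriv_of_rdd[OF cv K1] that by auto
    moreover have "(\<lambda>t. phi ((x + s *\<^sub>R d) + t *\<^sub>R d)) = (\<lambda>t. phi (x + (t + s) *\<^sub>R d))"
      by (rule ext) (simp add: scaleR_add_left algebra_simps)
    ultimately show ?thesis using DERIV_shift[of "\<lambda>s. phi (x + s *\<^sub>R d)" _ 0 s] by simp
  qed
  have "c/2 \<in> {T. T > 0 \<and> (\<exists>g'. continuous_on {0<..<T} g' \<and>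
            (\<forall>t\<in>{0<..<T}. ((\<lambda>s. ?psi (x + s *\<^sub>R d)) has_real_derivative g' t) (at t)))}"
  proof (intro CollectI conjI exI ballI)
    show "c/2 > 0" using c by simp
    show "continuous_on {0<..<c/2} g'"
      unfolding g'_def
    proof (intro continuous_intros)
      show "continuous_on {0<..<c/2} (\<lambda>s. G (x + s *\<^sub>R d))"
        by (rule continuous_on_compose2[OF Gc]) (auto intro!: continuous_intros)
      show "continuous_on {0<..<c/2} (\<lambda>s. rdd phi (x + s *\<^sub>R d) d)"
        by (rule convex_deriv_cont[OF conv_line[OF cv] open_greaterThanLessThan]) (rule Dphi)
    qed
    fix t assume "t \<in> {0<..<c/2}"
    then show "((\<lambda>s. ?psi (x + s *\<^sub>R d)) has_real_derivative g' t) (at t)"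
      unfolding g'_def using DERIV_add[OF f_line_deriv[OF Gd] Dphi] by simp
  qed
  then show "ereal (c/2) \<le> Gamma_max ?psi x d"
    unfolding Gamma_max_def by (intro Sup_upper imageI)
qed

lemma trunc_near:
  assumes trunc: "truncatable psi S m \<delta> \<kappa> T"
  shows "\<exists>c>0. \<forall>\<epsilon>>0. \<exists>u. dist u x < \<epsilon> \<and> ereal c \<le> Gamma psi u"
proof -
  let ?Q = "\<exists>c>0. \<forall>\<epsilon>>0. \<exists>u. dist u x < \<epsilon> \<and> ereal c \<le> Gamma psi u"
  have S0: "S 0 = UNIV" and dpos: "\<delta> > 0" and kpos: "\<kappa> > 0"
    and Sm: "\<forall>x\<in>S m. Gamma psi x \<ge> \<delta>"
    and TT: "\<And>a i x. a > 0 \<Longrightarrow> ereal a \<le> \<delta> \<Longrightarrow> i < m \<Longrightarrow> x \<in> S i - S (Suc i) \<Longrightarrow>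
        (if Gamma psi x \<ge> ereal a then T x a = x
         else T x a \<in> S (Suc i) \<and> Gamma psi (T x a) \<ge> ereal a \<and> norm (T x a - x) \<le> \<kappa> * a)"
    using trunc unfolding truncatable_def by blast+
  obtain a0 where a0: "0 < ereal a0" "ereal a0 < \<delta>" using ereal_dense2[OF dpos] by blast
  then have a0p: "a0 > 0" by simp
  have main: "k \<le> m \<Longrightarrow> (\<forall>\<epsilon>>0. \<exists>w\<in>S (m - k). dist w x < \<epsilon>) \<Longrightarrow> ?Q" for k
  proof (induction k)
    case 0
    show ?case
    proof (intro exI[of _ a0] conjI allI impI)
      show "a0 > 0" by (rule a0p)
      fix \<epsilon> :: real assume "\<epsilon> > 0"
      then obtain w where "w \<in> S m" "dist w x < \<epsilon>" using "0.prems"(2) by auto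
      then show "\<exists>u. dist u x < \<epsilon> \<and> ereal a0 \<le> Gamma psi u"
        using Sm a0(2) by (meson order.trans less_imp_le)
    qed
  next
    case (Suc k)
    define j where "j = m - Suc k"
    have jm: "j < m" and jS: "Suc j = m - k" using Suc.prems(1) unfolding j_def by auto
    show ?case
    proof (cases ?Q)
      case True then show ?thesis .
    next
      case False
      have "\<forall>\<epsilon>>0. \<exists>w\<in>S (m - k). dist w x < \<epsilon>"
      proof (intro allI impI)
        fix \<epsilon> :: real assume ep: "\<epsilon> > 0"
        define a where "a = min (\<epsilon> / (2 * \<kappa>)) a0"
        have ap: "a > 0" using ep kpos a0p by (simp add: a_def)
        have ad: "ereal a \<le> \<delta>" using a0(2) by (simp add: a_def) (meson ereal_less_eq(3) less_imp_le min.cobounded2 order.trans)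
        have ka: "\<kappa> * a \<le> \<epsilon> / 2"
        proof -
          have "a \<le> \<epsilon> / (2 * \<kappa>)" by (simp add: a_def)
          then have "\<kappa> * a \<le> \<kappa> * (\<epsilon> / (2 * \<kappa>))" using kpos by (intro mult_left_mono) auto
          also have "\<dots> = \<epsilon> / 2" using kpos by simp
          finally show ?thesis .
        qed
        obtain \<epsilon>0 where e0: "\<epsilon>0 > 0" "\<And>u. dist u x < \<epsilon>0 \<Longrightarrow> \<not> ereal a \<le> Gamma psi u"
          using False ap by (meson not_le)
        obtain w where w: "w \<in> S j" "dist w x < min \<epsilon>0 (\<epsilon>/2)"
          using Suc.prems(2) e0(1) ep unfolding j_def by (metis half_gt_zero min_less_iff_conj)
        have Gw: "\<not> ereal a \<le> Gamma psi w" using e0(2) w(2) by simp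
        show "\<exists>w\<in>S (m - k). dist w x < \<epsilon>"
        proof (cases "w \<in> S (Suc j)")
          case True
          have "dist w x < \<epsilon>" using w(2) ep by simp
          then show ?thesis using True jS by metis
        next
          case False
          have "T w a \<in> S (Suc j) \<and> norm (T w a - w) \<le> \<kappa> * a"
            using TT[OF ap ad jm, of w] False w(1) Gw by auto
          moreover have "dist (T w a) x \<le> norm (T w a - w) + dist w x"
            by (metis dist_norm dist_triangle)
          moreover have "dist w x < \<epsilon>/2" using w(2) by simp
          ultimately have "dist (T w a) x < \<epsilon>" using ka by linarith
          then show ?thesis using \<open>T w a \<in> S (Suc j) \<and> _\<close> jS by metis
        qed
      qed
      then show ?thesis using Suc.IH Suc.prems(1) by simp
    qed
  qed
  have "\<forall>\<epsilon>>0. \<exists>w\<in>S (m - m). dist w x < \<epsilon>" using S0 by (metis UNIV_I diff_self_eq_0 dist_self)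
  then show ?thesis using main[of m] by simp
qed



lemma aff_dir_subspace:
  fixes M :: "(real^'n) set"
  assumes "affine M" "M \<noteq> {}"
  shows "subspace (aff_dir M)"
  unfolding subspace_def
proof (intro conjI ballI allI)
  obtain z where z: "z \<in> M" using assms(2) by blast
  show "0 \<in> aff_dir M" unfolding aff_dir_def using z by force
  fix x y assume "x \<in> aff_dir M" "y \<in> aff_dir M"
  then obtain y1 z1 y2 z2 where e: "x = y1 - z1" "y = y2 - z2" "y1 \<in> M" "z1 \<in> M" "y2 \<in> M" "z2 \<in> M"
    unfolding aff_dir_def by blast
  have "y1 + 1 *\<^sub>R (y2 - z2) \<in> M" by (rule mem_affine_3_minus) (use assms e in auto)
  moreover have "x + y = (y1 + 1 *\<^sub>R (y2 - z2)) - z1" using e by simp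
  ultimately show "x + y \<in> aff_dir M" unfolding aff_dir_def using e by blast
next
  fix c :: real and x assume "x \<in> aff_dir M"
  then obtain y1 z1 where e: "x = y1 - z1" "y1 \<in> M" "z1 \<in> M"
    unfolding aff_dir_def by blast
  have "z1 + c *\<^sub>R (y1 - z1) \<in> M" by (rule mem_affine_3_minus) (use assms e in auto)
  moreover have "c *\<^sub>R x = (z1 + c *\<^sub>R (y1 - z1)) - z1" using e by simp
  ultimately show "c *\<^sub>R x \<in> aff_dir M" unfolding aff_dir_def using e by blast
qed

lemma aff_dir_line:
  fixes M :: "(real^'n) set"
  assumes "affine M" "x \<in> M" "\<xi> \<in> aff_dir M"
  shows "x + t *\<^sub>R \<xi> \<in> M"
proof -
  obtain y z where "\<xi> = y - z" "y \<in> M" "z \<in> M" using assms(3) unfolding aff_dir_def by blast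
  then show ?thesis using mem_affine_3_minus[OF assms(1,2)] by blast
qed

lemma subdiff_convex:
  fixes phi :: "real^'n \<Rightarrow> real"
  shows "convex (subdiff phi x)"
  unfolding convex_def subdiff_def
proof (intro CollectI allI impI ballI, elim CollectE conjE)
  fix a b :: "real^'n" and u v :: real and y
  assume a: "\<forall>y. phi x + a \<bullet> (y - x) \<le> phi y" and b: "\<forall>y. phi x + b \<bullet> (y - x) \<le> phi y"
    and uv: "0 \<le> u" "0 \<le> v" "u + v = 1"
  have "u * (phi x + a \<bullet> (y - x)) + v * (phi x + b \<bullet> (y - x)) \<le> u * phi y + v * phi y"
    using a b uv by (intro add_mono mult_left_mono) auto
  moreover have "u * (phi x + a \<bullet> (y - x)) + v * (phi x + b \<bullet> (y - x))
      = (u + v) * phi x + (u *\<^sub>R a + v *\<^sub>R b) \<bullet> (y - x)"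
    by (simp add: inner_add_left distrib_left distrib_right)
  moreover have "u * phi y + v * phi y = (u + v) * phi y" by (simp add: distrib_right)
  ultimately show "phi x + (u *\<^sub>R a + v *\<^sub>R b) \<bullet> (y - x) \<le> phi y"
    using uv(3) by simp
qed

lemma subdiff_closed:
  fixes phi :: "real^'n \<Rightarrow> real"
  shows "closed (subdiff phi x)"
  unfolding subdiff_def
  by (intro closed_Collect_all closed_Collect_le) (auto intro!: continuous_intros)

lemma grad_eq:
  fixes f :: "real^'n \<Rightarrow> real"
  assumes "(f has_derivative (\<lambda>h. G \<bullet> h)) (at x)"
  shows "grad f x = G"
  unfolding grad_def
proof (rule the_equality)
  show "(f has_derivative (\<lambda>h. G \<bullet> h)) (at x)" by (rule assms)
  fix g assume "(f has_derivative (\<lambda>h. g \<bullet> h)) (at x)"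
  then have "(\<lambda>h. g \<bullet> h) = (\<lambda>h. G \<bullet> h)" using has_derivative_unique assms by blast
  then have "g \<bullet> (g - G) = G \<bullet> (g - G)" by metis
  then have "(g - G) \<bullet> (g - G) = 0" by (simp add: inner_diff_left)
  then show "g = G" by simp
qed

lemma Lam_facts:
  fixes Lam :: "real^'n^'n"
  assumes sym: "transpose Lam = Lam" and pd: "\<forall>v. v \<noteq> 0 \<longrightarrow> 0 < v \<bullet> (Lam *v v)"
  shows "Lam *v (matrix_inv Lam *v w) = w" and "u \<bullet> (Lam *v v) = (Lam *v u) \<bullet> v"
proof -
  have "\<forall>x. Lam *v x = 0 \<longrightarrow> x = 0"
  proof (intro allI impI)
    fix x assume "Lam *v x = 0"
    then have "x \<bullet> (Lam *v x) = 0" by simp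
    then show "x = 0" using pd by (metis less_irrefl)
  qed
  then have "invertible Lam" using matrix_left_invertible_ker invertible_left_inverse by blast
  then have "Lam ** matrix_inv Lam = mat 1"
    unfolding invertible_def matrix_inv_def by (rule someI2_ex) auto
  then show "Lam *v (matrix_inv Lam *v w) = w" by (metis matrix_vector_mul_assoc matrix_vector_mul_lid)
  have "u v* transpose Lam = Lam *v u" by simp
  then have "u v* Lam = Lam *v u" using sym by simp
  then show "u \<bullet> (Lam *v v) = (Lam *v u) \<bullet> v" using dot_lmul_matrix[of u Lam v] by simp
qed

lemma prox_eq:
  fixes Lam :: "real^'n^'n" and phi :: "real^'n \<Rightarrow> real"
  assumes sym: "transpose Lam = Lam" and pd: "\<forall>v. v \<noteq> 0 \<longrightarrow> 0 < v \<bullet> (Lam *v v)"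
    and w: "w \<in> subdiff phi x" and b: "Lam *v b = w"
  shows "prox Lam phi (x + b) = x"
proof -
  let ?z = "x + b"
  let ?obj = "\<lambda>y. phi y + (1/2) * ((y - ?z) \<bullet> (Lam *v (y - ?z)))"
  have strict: "?obj x < ?obj y" if "y \<noteq> x" for y
  proof -
    define a where "a = y - x"
    have a0: "a \<noteq> 0" using that a_def by simp
    have sg: "phi y \<ge> phi x + w \<bullet> a" using w unfolding subdiff_def a_def by blast
    have ba: "b \<bullet> (Lam *v a) = w \<bullet> a" using Lam_facts(2)[OF sym pd, of b a] b by simp
    have yz: "y - ?z = a - b" unfolding a_def by simp
    have La: "Lam *v (a - b) = Lam *v a - w" using b by (simp add: matrix_vector_mult_diff_distrib)
    have e1: "(y - ?z) \<bullet> (Lam *v (y - ?z)) = a \<bullet> (Lam *v a) - 2 * (w \<bullet> a) + b \<bullet> w"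
    proof -
      have "(a - b) \<bullet> (Lam *v a - w) = a \<bullet> (Lam *v a) - a \<bullet> w - b \<bullet> (Lam *v a) + b \<bullet> w"
        by (simp add: inner_diff_left inner_diff_right)
      moreover have "a \<bullet> w = w \<bullet> a" by (rule inner_commute)
      ultimately show ?thesis unfolding yz La using ba by simp
    qed
    have "Lam *v (0 - b) = Lam *v 0 - Lam *v b" by (rule matrix_vector_mult_diff_distrib)
    then have "Lam *v (- b) = - w" using b by simp
    moreover have "x - ?z = - b" by simp
    ultimately have e2: "(x - ?z) \<bullet> (Lam *v (x - ?z)) = b \<bullet> w"
      by simp
    have pos: "0 < a \<bullet> (Lam *v a)" using pd a0 by blast
    have o1: "?obj x = phi x + (1/2) * (b \<bullet> w)" using e2 by simp
    have o2: "?obj y = phi y + (1/2) * (a \<bullet> (Lam *v a) - 2 * (w \<bullet> a) + b \<bullet> w)" using e1 by simp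
    show ?thesis unfolding o1 o2 using pos sg by (simp add: algebra_simps)
  qed
  have P: "\<forall>w'. ?obj x \<le> ?obj w'" using strict by (metis order.order_iff_strict)
  show ?thesis unfolding prox_def
  proof (rule someI2[of _ x])
    show "\<forall>w'. ?obj x \<le> ?obj w'" by (rule P)
    fix y assume "\<forall>w'. ?obj y \<le> ?obj w'"
    then have "?obj y \<le> ?obj x" by blast
    then show "y = x" using strict by (meson not_le)
  qed
qed

lemma dirderiv_eq:
  fixes f phi :: "real^'n \<Rightarrow> real"
  assumes Gd: "\<And>x. (f has_derivative (\<lambda>h. G x \<bullet> h)) (at x)" and cv: "convex_on UNIV phi"
  shows "dirderiv (\<lambda>y. f y + phi y) x e = G x \<bullet> e + rdd phi x e"
  unfolding dirderiv_def
proof (rule tendsto_Lim[OF trivial_limit_at_right_real])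
  have "((\<lambda>s. f (x + s *\<^sub>R e)) has_real_derivative (G (x + 0 *\<^sub>R e) \<bullet> e)) (at 0)"
    by (rule f_line_deriv[OF Gd])
  then have "((\<lambda>t. (f (x + t *\<^sub>R e) - f x) / t) \<longlongrightarrow> G x \<bullet> e) (at 0)"
    unfolding DERIV_def by simp
  then have "((\<lambda>t. (f (x + t *\<^sub>R e) - f x) / t) \<longlongrightarrow> G x \<bullet> e) (at_right 0)"
    using filterlim_at_split by blast
  note calculation = tendsto_add[OF this rdd_tendsto(1)[OF cv, of x e]]
  show "((\<lambda>t. (f (x + t *\<^sub>R e) + phi (x + t *\<^sub>R e) - (f x + phi x)) / t) \<longlongrightarrow> G x \<bullet> e + rdd phi x e) (at_right 0)"
  proof -
    have "\<And>t. (f (x + t *\<^sub>R e) + phi (x + t *\<^sub>R e) - (f x + phi x)) / t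
        = (f (x + t *\<^sub>R e) - f x) / t + (phi (x + t *\<^sub>R e) - phi x) / t"
      by (simp add: diff_divide_distrib add_divide_distrib)
    then show ?thesis using calculation by simp
  qed
qed

lemma orth_subspace_zero:
  fixes a :: "real^'n"
  assumes "subspace T" "\<forall>\<tau>\<in>T. b \<le> a \<bullet> \<tau>" "\<tau> \<in> T"
  shows "a \<bullet> \<tau> = 0"
proof (rule ccontr)
  assume ne: "a \<bullet> \<tau> \<noteq> 0"
  have "((b - 1) / (a \<bullet> \<tau>)) *\<^sub>R \<tau> \<in> T" using assms(1,3) by (simp add: subspace_scale)
  then have "b \<le> a \<bullet> (((b - 1) / (a \<bullet> \<tau>)) *\<^sub>R \<tau>)" using assms(2) by blast
  also have "\<dots> = b - 1" using ne by simp
  finally show False by simp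
qed

lemma local_claim:
  fixes f phi :: "real^'n \<Rightarrow> real"
  assumes Gc: "continuous_on UNIV G"
    and ps: "partly_smooth_affine phi xs M"
    and C3: "- G xs \<in> rel_interior (subdiff phi xs)"
  shows "\<exists>rK>0. \<forall>x\<in>ball xs rK \<inter> M. \<exists>w\<in>subdiff phi x. G x + w \<in> aff_dir M"
proof (rule ccontr)
  define Sx where "Sx = subdiff phi xs"
  define Pg where "Pg = {a - b | a b. a \<in> Sx \<and> b \<in> Sx}"
  define T where "T = aff_dir M"
  have affM: "affine M" and xsM: "xs \<in> M"
    and TP: "T = orth_comp (span Pg)"
    and isc: "\<forall>xk. (\<forall>k. xk k \<in> M) \<and> xk \<longlonglongrightarrow> xs \<longrightarrow>
        (\<forall>v\<in>subdiff phi xs. \<exists>vk. (\<forall>k. vk k \<in> subdiff phi (xk k)) \<and> vk \<longlonglongrightarrow> v)"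
    using ps unfolding partly_smooth_affine_def subdiff_cont_rel_def par_def T_def Pg_def Sx_def by blast+
  have subT: "subspace T" unfolding T_def using aff_dir_subspace affM xsM by blast
  assume "\<not> (\<exists>rK>0. \<forall>x\<in>ball xs rK \<inter> M. \<exists>w\<in>subdiff phi x. G x + w \<in> aff_dir M)"
  then have "\<forall>k::nat. \<exists>x. x \<in> ball xs (1 / Suc k) \<inter> M \<and> (\<forall>w\<in>subdiff phi x. G x + w \<notin> T)"
    unfolding T_def by (metis of_nat_0_less_iff zero_less_Suc zero_less_divide_1_iff)
  then obtain X where X: "\<And>k. X k \<in> ball xs (1 / Suc k) \<inter> M" "\<And>k. \<forall>w\<in>subdiff phi (X k). G (X k) + w \<notin> T"
    by metis
  have XM: "\<forall>k. X k \<in> M" using X(1) by blast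
  have Xlim: "X \<longlonglongrightarrow> xs"
  proof (rule LIMSEQ_I)
    fix r :: real assume "r > 0"
    then obtain n0 where n0: "1 / Suc n0 < r" using reals_Archimedean[of r] by (metis inverse_eq_divide)
    show "\<exists>no. \<forall>n\<ge>no. norm (X n - xs) < r"
    proof (intro exI allI impI)
      fix n assume "n \<ge> n0"
      then have "1 / real (Suc n) \<le> 1 / Suc n0" by (simp add: frac_le)
      moreover have "norm (X n - xs) < 1 / Suc n" using X(1)[of n] by (simp add: dist_norm norm_minus_commute)
      ultimately show "norm (X n - xs) < r" using n0 by linarith
    qed
  qed
  define v0 where "v0 = - G xs"
  obtain \<epsilon> where v0S: "v0 \<in> Sx" and \<epsilon>: "\<epsilon> > 0" "ball v0 \<epsilon> \<inter> affine hull Sx \<subseteq> Sx"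
    using C3 unfolding mem_rel_interior_ball v0_def Sx_def by blast
  obtain V0 where V0: "\<And>k. V0 k \<in> subdiff phi (X k)"
    using isc XM Xlim v0S unfolding Sx_def by blast
  have "\<forall>k. \<exists>a. norm a = 1 \<and> (\<forall>\<tau>\<in>T. a \<bullet> \<tau> = 0) \<and> (\<forall>w\<in>subdiff phi (X k). a \<bullet> (G (X k) + w) \<le> 0)"
  proof
    fix k
    have "\<exists>a b. a \<noteq> 0 \<and> (\<forall>x\<in>(+) (G (X k)) ` subdiff phi (X k). inner a x \<le> b) \<and> (\<forall>x\<in>T. inner a x \<ge> b)"
    proof (rule separating_hyperplane_sets)
      show "convex ((+) (G (X k)) ` subdiff phi (X k))" by (simp add: subdiff_convex)
      show "convex T" by (rule subspace_imp_convex[OF subT])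
      show "(+) (G (X k)) ` subdiff phi (X k) \<noteq> {}" using V0[of k] by blast
      show "T \<noteq> {}" using subT subspace_0 by blast
      show "(+) (G (X k)) ` subdiff phi (X k) \<inter> T = {}" using X(2)[of k] by blast
    qed
    then obtain a b where ab: "a \<noteq> 0" "\<forall>x\<in>(+) (G (X k)) ` subdiff phi (X k). a \<bullet> x \<le> b" "\<forall>x\<in>T. a \<bullet> x \<ge> b"
      by blast
    have aT: "\<forall>\<tau>\<in>T. a \<bullet> \<tau> = 0" using orth_subspace_zero[OF subT ab(3)] by blast
    have b0: "b \<le> 0" using ab(3) subspace_0[OF subT] by force
    define a' where "a' = (1 / norm a) *\<^sub>R a"
    show "\<exists>a. norm a = 1 \<and> (\<forall>\<tau>\<in>T. a \<bullet> \<tau> = 0) \<and> (\<forall>w\<in>subdiff phi (X k). a \<bullet> (G (X k) + w) \<le> 0)"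
    proof (intro exI[of _ a'] conjI ballI)
      show "norm a' = 1" unfolding a'_def using ab(1) by simp
      fix \<tau> assume "\<tau> \<in> T" then show "a' \<bullet> \<tau> = 0" unfolding a'_def using aT by simp
    next
      fix w assume "w \<in> subdiff phi (X k)"
      then have "a \<bullet> (G (X k) + w) \<le> 0" using ab(2) b0 by force
      then show "a' \<bullet> (G (X k) + w) \<le> 0" unfolding a'_def using ab(1)
        by (simp add: divide_nonpos_pos)
    qed
  qed
  then obtain E where E: "\<And>k. norm (E k) = 1" "\<And>k \<tau>. \<tau> \<in> T \<Longrightarrow> E k \<bullet> \<tau> = 0"
    "\<And>k w. w \<in> subdiff phi (X k) \<Longrightarrow> E k \<bullet> (G (X k) + w) \<le> 0"
    by metis
  have "E k \<in> sphere 0 1" for k using E(1) by simp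
  then obtain e r where e: "e \<in> sphere 0 1" and r: "strict_mono r" and Elim: "(E \<circ> r) \<longlonglongrightarrow> e"
    using compact_sphere[of "0::real^'n" 1] unfolding compact_def by meson
  have ne: "norm e = 1" using e by simp
  have eT: "e \<bullet> \<tau> = 0" if "\<tau> \<in> T" for \<tau>
  proof -
    have "((\<lambda>k. (E \<circ> r) k \<bullet> \<tau>) \<longlonglongrightarrow> e \<bullet> \<tau>)" by (intro tendsto_intros Elim)
    moreover have "(\<lambda>k. (E \<circ> r) k \<bullet> \<tau>) = (\<lambda>k. 0)" using E(2)[OF that] by auto
    ultimately show ?thesis using LIMSEQ_unique tendsto_const by metis
  qed
  have eP: "e \<in> span Pg"
  proof -
    obtain y z where yz: "y \<in> span Pg" "\<And>w. w \<in> span Pg \<Longrightarrow> orthogonal z w" "e = y + z"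
      using orthogonal_subspace_decomp_exists[of Pg e] by blast
    have "z \<in> T" unfolding TP orth_comp_def using yz(2) by (simp add: orthogonal_def)
    then have "e \<bullet> z = 0" by (rule eT)
    moreover have "y \<bullet> z = 0" using yz(2)[OF yz(1)] by (simp add: orthogonal_def inner_commute)
    ultimately have "z \<bullet> z = 0" using yz(3) by (simp add: inner_add_left)
    then show ?thesis using yz by simp
  qed
  define v where "v = v0 + (\<epsilon>/2) *\<^sub>R e"
  have vS: "v \<in> Sx"
  proof -
    define B where "B = (\<lambda>x. - v0 + x) ` (Sx - {v0})"
    have "Pg \<subseteq> span B"
    proof
      fix q assume "q \<in> Pg"
      then obtain a b where q: "q = a - b" "a \<in> Sx" "b \<in> Sx" unfolding Pg_def by blast
      have sp: "- v0 + c \<in> span B" if "c \<in> Sx" for c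
      proof (cases "c = v0")
        case True then show ?thesis by (simp add: span_zero)
      next
        case False then show ?thesis using that unfolding B_def by (intro span_base) blast
      qed
      have "q = (- v0 + a) - (- v0 + b)" using q by simp
      then show "q \<in> span B" using sp[OF q(2)] sp[OF q(3)] span_diff by metis
    qed
    then have "span Pg \<subseteq> span B" by (simp add: span_minimal)
    then have "(\<epsilon>/2) *\<^sub>R e \<in> span B" using eP span_mul by blast
    then have "v \<in> affine hull Sx"
      unfolding affine_hull_span2[OF v0S] v_def B_def by blast
    moreover have "v \<in> ball v0 \<epsilon>" unfolding v_def using ne \<epsilon>(1) by (simp add: dist_norm)
    ultimately show ?thesis using \<epsilon>(2) by blast
  qed
  obtain V where V: "\<And>k. V k \<in> subdiff phi (X k)" "V \<longlonglongrightarrow> v"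
    using isc XM Xlim vS unfolding Sx_def by blast
  have "(\<lambda>k. (E \<circ> r) k \<bullet> (G ((X \<circ> r) k) + (V \<circ> r) k)) \<longlonglongrightarrow> e \<bullet> (G xs + v)"
  proof (intro tendsto_intros Elim)
    show "(\<lambda>k. G ((X \<circ> r) k)) \<longlonglongrightarrow> G xs"
      using continuous_on_tendsto_compose[OF Gc LIMSEQ_subseq_LIMSEQ[OF Xlim r]] by simp
    show "(V \<circ> r) \<longlonglongrightarrow> v" by (rule LIMSEQ_subseq_LIMSEQ[OF V(2) r])
  qed
  moreover have "\<forall>k. (E \<circ> r) k \<bullet> (G ((X \<circ> r) k) + (V \<circ> r) k) \<le> 0" using E(3) V(1) by simp
  ultimately have "e \<bullet> (G xs + v) \<le> 0" by (meson LIMSEQ_le_const2)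
  moreover have "G xs + v = (\<epsilon>/2) *\<^sub>R e" unfolding v_def v0_def by simp
  moreover have "e \<bullet> ((\<epsilon>/2) *\<^sub>R e) = \<epsilon>/2" using ne by (simp add: inner_commute power2_norm_eq_inner[symmetric])
  ultimately show False using \<epsilon>(1) by simp
qed

lemma sq_expand:
  fixes p q :: "real^'n"
  shows "(- p + q) \<bullet> (- p + q) = p \<bullet> p + q \<bullet> q - 2 * (q \<bullet> p)"
proof -
  have "(- p + q) \<bullet> (- p + q) = (- p) \<bullet> (- p) + (- p) \<bullet> q + (q \<bullet> (- p) + q \<bullet> q)"
    by (simp only: inner_add_left inner_add_right)
  also have "\<dots> = p \<bullet> p + q \<bullet> q - 2 * (q \<bullet> p)" by (simp add: inner_commute)
  finally show ?thesis .
qed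

lemma pointwise_main:
  fixes f phi :: "real^'n \<Rightarrow> real" and Lam :: "real^'n^'n"
  assumes Gd: "\<And>x. (f has_derivative (\<lambda>h. G x \<bullet> h)) (at x)"
    and cv: "convex_on UNIV phi"
    and sym: "transpose Lam = Lam" and pd: "\<forall>v. v \<noteq> 0 \<longrightarrow> 0 < v \<bullet> (Lam *v v)"
    and affM: "affine M" and xM: "x \<in> M" and U: "open U" "x \<in> U"
    and gder: "\<And>y. y \<in> U \<Longrightarrow> (g has_derivative (\<lambda>h. g1 y \<bullet> h)) (at y)"
    and geq: "\<forall>y\<in>U \<inter> M. phi y = g y"
    and w: "w \<in> subdiff phi x" and wT: "G x + w \<in> aff_dir M"
  shows "normal_map Lam f phi (tau Lam f phi x)
                = dirderiv (\<lambda>y. f y + phi y) x (steepest_dir f phi x) *\<^sub>R steepest_dir f phi x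
            \<and> dirderiv (\<lambda>y. f y + phi y) x (steepest_dir f phi x) *\<^sub>R steepest_dir f phi x
                = riem_grad (\<lambda>y. f y + phi y) M x"
proof -
  define T where "T = aff_dir M"
  define gv where "gv = G x + w"
  have gvT: "gv \<in> T" using wT unfolding gv_def T_def .
  have subT: "subspace T" unfolding T_def using aff_dir_subspace affM xM by blast
  have gradx: "grad f x = G x" by (rule grad_eq[OF Gd])
  have F2: "((\<lambda>t. phi (x + t *\<^sub>R \<xi>)) has_real_derivative (g1 x \<bullet> \<xi>)) (at 0)" if "\<xi> \<in> T" for \<xi>
  proof -
    have l: "((\<lambda>s. x + s *\<^sub>R \<xi>) has_derivative (\<lambda>h. h *\<^sub>R \<xi>)) (at 0)"
      by (auto intro!: derivative_eq_intros)
    have "((\<lambda>s. g (x + s *\<^sub>R \<xi>)) has_derivative (\<lambda>h. g1 (x + 0 *\<^sub>R \<xi>) \<bullet> (h *\<^sub>R \<xi>))) (at 0)"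
      by (rule has_derivative_compose[OF l]) (use gder U in simp)
    moreover have "(\<lambda>h. g1 (x + 0 *\<^sub>R \<xi>) \<bullet> (h *\<^sub>R \<xi>)) = (*) (g1 x \<bullet> \<xi>)"
      by (rule ext) simp
    ultimately have dg: "((\<lambda>s. g (x + s *\<^sub>R \<xi>)) has_real_derivative (g1 x \<bullet> \<xi>)) (at 0)"
      unfolding has_field_derivative_def by simp
    show ?thesis
    proof (rule has_field_derivative_transform_within_open[OF dg])
      show "open ((\<lambda>t. x + t *\<^sub>R \<xi>) -` U)"
        by (rule continuous_open_vimage[OF U(1)]) (auto intro!: continuous_intros)
      show "0 \<in> (\<lambda>t. x + t *\<^sub>R \<xi>) -` U" using U by simp
      fix t assume "t \<in> (\<lambda>t. x + t *\<^sub>R \<xi>) -` U"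
      moreover have "x + t *\<^sub>R \<xi> \<in> M" using aff_dir_line[OF affM xM] that unfolding T_def by blast
      ultimately show "g (x + t *\<^sub>R \<xi>) = phi (x + t *\<^sub>R \<xi>)" using geq by simp
    qed
  qed
  have F3: "w' \<bullet> \<xi> = g1 x \<bullet> \<xi>" and F3r: "rdd phi x \<xi> = g1 x \<bullet> \<xi>"
    if "w' \<in> subdiff phi x" "\<xi> \<in> T" for w' \<xi>
  proof -
    have r1: "rdd phi x \<xi> = g1 x \<bullet> \<xi>" and r2: "rdd phi x (-\<xi>) = - (g1 x \<bullet> \<xi>)"
      using rdd_of_deriv[OF cv F2[OF that(2)]] by auto
    have "w' \<bullet> \<xi> \<le> rdd phi x \<xi>" "w' \<bullet> (-\<xi>) \<le> rdd phi x (-\<xi>)"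
      using rdd_subgrad[OF that(1)] by blast+
    then show "w' \<bullet> \<xi> = g1 x \<bullet> \<xi>" using r1 r2 by simp
    show "rdd phi x \<xi> = g1 x \<bullet> \<xi>" by (rule r1)
  qed
  have orthw: "(w - w') \<bullet> \<xi> = 0" if "w' \<in> subdiff phi x" "\<xi> \<in> T" for w' \<xi>
    using F3[OF w that(2)] F3[OF that] by (simp add: inner_diff_left)
  have DD: "dirderiv (\<lambda>y. f y + phi y) x e = G x \<bullet> e + rdd phi x e" for e
    by (rule dirderiv_eq[OF Gd cv])
  have DDlb: "gv \<bullet> e \<le> dirderiv (\<lambda>y. f y + phi y) x e" for e
    using rdd_subgrad[OF w, of e] unfolding DD gv_def by (simp add: inner_add_left)
  have DDT: "dirderiv (\<lambda>y. f y + phi y) x \<xi> = gv \<bullet> \<xi>" if "\<xi> \<in> T" for \<xi>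
    unfolding DD gv_def using F3[OF w that] F3r[OF w that] by (simp add: inner_add_left)
  have cp: "closest_point (subdiff phi x) (- grad f x) = w"
  proof (rule closest_point_unique[OF subdiff_convex subdiff_closed w, symmetric], intro ballI)
    fix z assume z: "z \<in> subdiff phi x"
    have e: "- G x - z = (- gv) + (w - z)" unfolding gv_def by simp
    have "(- G x - z) \<bullet> (- G x - z) = gv \<bullet> gv + (w - z) \<bullet> (w - z) - 2 * ((w - z) \<bullet> gv)"
      unfolding e by (rule sq_expand)
    moreover have "(w - z) \<bullet> gv = 0" by (rule orthw[OF z gvT])
    moreover have "- G x - w = - gv" unfolding gv_def by simp
    ultimately have "(- G x - w) \<bullet> (- G x - w) \<le> (- G x - z) \<bullet> (- G x - z)" by simp
    then show "dist (- grad f x) w \<le> dist (- grad f x) z"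
      unfolding gradx dist_norm norm_le .
  qed
  define b where "b = matrix_inv Lam *v w"
  have Lb: "Lam *v b = w" unfolding b_def by (rule Lam_facts(1)[OF sym pd])
  have taux: "tau Lam f phi x = x + b" unfolding tau_def cp b_def ..
  have proxx: "prox Lam phi (x + b) = x" by (rule prox_eq[OF sym pd w Lb])
  have NM: "normal_map Lam f phi (tau Lam f phi x) = gv"
    unfolding normal_map_def taux proxx gradx gv_def using Lb by simp
  have zero_iff: "0 \<in> subdiff_psi f phi x \<longleftrightarrow> gv = 0"
  proof
    assume "0 \<in> subdiff_psi f phi x"
    then obtain w' where w': "w' \<in> subdiff phi x" "0 = G x + w'" unfolding subdiff_psi_def gradx by blast
    then have "gv = w - w'" unfolding gv_def by (simp add: algebra_simps)
    then have "gv \<bullet> gv = 0" using orthw[OF w'(1) gvT] by simp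
    then show "gv = 0" by simp
  next
    assume "gv = 0"
    then have "0 = G x + w" unfolding gv_def by simp
    then show "0 \<in> subdiff_psi f phi x" unfolding subdiff_psi_def gradx using w by (rule image_eqI)
  qed
  have SD: "dirderiv (\<lambda>y. f y + phi y) x (steepest_dir f phi x) *\<^sub>R steepest_dir f phi x = gv"
  proof (cases "gv = 0")
    case True
    then have "steepest_dir f phi x = 0" unfolding steepest_dir_def using zero_iff by simp
    then show ?thesis using True by simp
  next
    case False
    define ds where "ds = - (1 / norm gv) *\<^sub>R gv"
    have dsT: "ds \<in> T" unfolding ds_def using subspace_neg[OF subT subspace_scale[OF subT gvT]] by simp
    have nds: "norm ds = 1" unfolding ds_def using False by simp
    have gds: "gv \<bullet> ds = - norm gv" unfolding ds_def using False
      by (simp add: power2_norm_eq_inner[symmetric] power2_eq_square)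
    have Dds: "dirderiv (\<lambda>y. f y + phi y) x ds = - norm gv" using DDT[OF dsT] gds by simp
    let ?P = "\<lambda>d. norm d \<le> 1 \<and> (\<forall>e. norm e \<le> 1 \<longrightarrow>
            dirderiv (\<lambda>y. f y + phi y) x d \<le> dirderiv (\<lambda>y. f y + phi y) x e)"
    have Pds: "?P ds"
    proof (intro conjI allI impI)
      show "norm ds \<le> 1" using nds by simp
      fix e :: "real^'n" assume e: "norm e \<le> 1"
      have "- norm gv \<le> - norm gv * norm e" using e by (simp add: mult_left_le)
      also have "\<dots> \<le> gv \<bullet> e" using Cauchy_Schwarz_ineq2[of gv e] by (simp add: abs_le_iff)
      also have "\<dots> \<le> dirderiv (\<lambda>y. f y + phi y) x e" by (rule DDlb)
      finally show "dirderiv (\<lambda>y. f y + phi y) x ds \<le> dirderiv (\<lambda>y. f y + phi y) x e" using Dds by simp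
    qed
    have uniq: "d = ds" if "?P d" for d
    proof -
      have nd: "norm d \<le> 1" using that by blast
      have "dirderiv (\<lambda>y. f y + phi y) x d \<le> dirderiv (\<lambda>y. f y + phi y) x ds" using that nds by simp
      then have "gv \<bullet> d \<le> - norm gv" using DDlb[of d] Dds by linarith
      then have "d \<bullet> ds \<ge> 1" unfolding ds_def using False by (simp add: inner_commute field_simps)
      moreover have "(d - ds) \<bullet> (d - ds) = d \<bullet> d - 2 * (d \<bullet> ds) + ds \<bullet> ds"
        by (simp add: inner_diff_left inner_diff_right inner_commute)
      moreover have "d \<bullet> d \<le> 1" using nd by (simp add: power2_norm_eq_inner[symmetric] power_le_one)
      moreover have "ds \<bullet> ds = 1" using nds by (simp add: power2_norm_eq_inner[symmetric])
      ultimately have "(d - ds) \<bullet> (d - ds) \<le> 0" by linarith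
      then have "(d - ds) \<bullet> (d - ds) = 0" using inner_ge_zero[of "d - ds"] by linarith
      then show "d = ds" by simp
    qed
    have "(SOME d. ?P d) = ds"
    proof (rule some_equality)
      show "?P ds" by (rule Pds)
    next
      fix d assume "?P d" then show "d = ds" by (rule uniq)
    qed
    then have "steepest_dir f phi x = ds"
      unfolding steepest_dir_def using zero_iff False by simp
    then show ?thesis using Dds False unfolding ds_def by simp
  qed
  have RG: "riem_grad (\<lambda>y. f y + phi y) M x = gv"
    unfolding riem_grad_def
  proof (rule the_equality)
    have "((\<lambda>t. f (x + t *\<^sub>R \<xi>) + phi (x + t *\<^sub>R \<xi>)) has_real_derivative (gv \<bullet> \<xi>)) (at 0)"
      if "\<xi> \<in> aff_dir M" for \<xi>
    proof -
      have "\<xi> \<in> T" using that T_def by simp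
      from DERIV_add[OF f_line_deriv[OF Gd, of x \<xi> 0] F2[OF this]]
      show ?thesis unfolding gv_def using F3[OF w \<open>\<xi> \<in> T\<close>] by (simp add: inner_add_left)
    qed
    note gder2 = this
    then show "gv \<in> aff_dir M \<and> (\<forall>\<xi>\<in>aff_dir M. ((\<lambda>t. f (x + t *\<^sub>R \<xi>) + phi (x + t *\<^sub>R \<xi>)) has_real_derivative (gv \<bullet> \<xi>)) (at 0))"
      using gvT T_def by blast
    fix v assume v: "v \<in> aff_dir M \<and> (\<forall>\<xi>\<in>aff_dir M. ((\<lambda>t. f (x + t *\<^sub>R \<xi>) + phi (x + t *\<^sub>R \<xi>)) has_real_derivative (v \<bullet> \<xi>)) (at 0))"
    have "v - gv \<in> aff_dir M" using v gvT subT T_def by (simp add: subspace_diff)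
    then have "v \<bullet> (v - gv) = gv \<bullet> (v - gv)"
    proof -
      assume h: "v - gv \<in> aff_dir M"
      have d1: "((\<lambda>t. f (x + t *\<^sub>R (v - gv)) + phi (x + t *\<^sub>R (v - gv))) has_real_derivative (v \<bullet> (v - gv))) (at 0)"
        using v h by blast
      have d2: "((\<lambda>t. f (x + t *\<^sub>R (v - gv)) + phi (x + t *\<^sub>R (v - gv))) has_real_derivative (gv \<bullet> (v - gv))) (at 0)"
        using gder2 h by blast
      show ?thesis by (rule DERIV_unique[OF d1 d2])
    qed
    then have "(v - gv) \<bullet> (v - gv) = 0" by (simp add: inner_diff_left)
    then show "v = gv" by simp
  qed
  show ?thesis using NM SD RG by simp
qed


theorem lemma5p3:
  fixes f phi :: "real ^ 'n \<Rightarrow> real"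
    and Lam :: "real ^ 'n ^ 'n"
    and S :: "nat \<Rightarrow> (real ^ 'n) set" and m :: nat and \<delta> :: ereal and \<kappa> :: real
    and T :: "real ^ 'n \<Rightarrow> real \<Rightarrow> real ^ 'n"
    and xs :: "real ^ 'n" and istar :: nat and M :: "(real ^ 'n) set"
  assumes f_C1: "C1_fun f"
    and phi_convex: "convex_on UNIV phi"
    and Lam_sym: "transpose Lam = Lam"
    and Lam_pd: "\<forall>v. v \<noteq> 0 \<longrightarrow> 0 < v \<bullet> (Lam *v v)"
    and trunc: "truncatable (\<lambda>y. f y + phi y) S m \<delta> \<kappa> T"
    and stat: "stationary f phi xs"
    and istar_le: "istar \<le> m"
    and xs_in: "xs \<in> S istar"
    and xs_notin: "istar < m \<longrightarrow> xs \<notin> S (Suc istar)"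
    and C1_ps: "partly_smooth_affine phi xs M"
    and C1_loc: "\<forall>r. 0 < r \<and> ereal r < Gamma (\<lambda>y. f y + phi y) xs \<longrightarrow>
                   ball xs r \<inter> S istar = ball xs r \<inter> M"
    and C3: "- grad f xs \<in> rel_interior (subdiff phi xs)"
  shows "\<exists>r0. 0 < r0 \<and> ereal r0 < Gamma (\<lambda>y. f y + phi y) xs \<and>
           (\<forall>x\<in>ball xs r0 \<inter> M.
              normal_map Lam f phi (tau Lam f phi x)
                = dirderiv (\<lambda>y. f y + phi y) x (steepest_dir f phi x) *\<^sub>R steepest_dir f phi x
            \<and> dirderiv (\<lambda>y. f y + phi y) x (steepest_dir f phi x) *\<^sub>R steepest_dir f phi x
                = riem_grad (\<lambda>y. f y + phi y) M x)"
proof -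
  obtain G where Gc: "continuous_on UNIV G" and Gd0: "\<forall>x. (f has_derivative (\<lambda>h. G x \<bullet> h)) (at x)"
    using f_C1 unfolding C1_fun_def by blast
  have Gd: "\<And>x. (f has_derivative (\<lambda>h. G x \<bullet> h)) (at x)" using Gd0 by blast
  obtain c where c: "c > 0" "\<forall>\<epsilon>>0. \<exists>u. dist u xs < \<epsilon> \<and> ereal c \<le> Gamma (\<lambda>y. f y + phi y) u"
    using trunc_near[OF trunc, of xs] by blast
  have Gam: "ereal (c/2) \<le> Gamma (\<lambda>y. f y + phi y) xs"
    by (rule gamma_pos_from_near[OF Gd Gc phi_convex c(1)]) (use c(2) in blast)
  have C3': "- G xs \<in> rel_interior (subdiff phi xs)" using C3 grad_eq[OF Gd] by simp
  obtain rK where rK: "rK > 0" "\<forall>x\<in>ball xs rK \<inter> M. \<exists>w\<in>subdiff phi x. G x + w \<in> aff_dir M"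
    using local_claim[OF Gc C1_ps C3'] by blast
  obtain U g where affM: "affine M" and U: "open U" "xs \<in> U" "C2_on U g" "\<forall>y\<in>U \<inter> M. phi y = g y"
    using C1_ps unfolding partly_smooth_affine_def by blast
  obtain g1 where g1: "\<forall>y\<in>U. (g has_derivative (\<lambda>h. g1 y \<bullet> h)) (at y)"
    using U(3) unfolding C2_on_def by blast
  obtain rU where rU: "rU > 0" "ball xs rU \<subseteq> U" using U(1,2) open_contains_ball by blast
  define r0 where "r0 = min (c/4) (min rU rK)"
  have r0p: "0 < r0" unfolding r0_def using c(1) rU(1) rK(1) by simp
  have "r0 < c/2" unfolding r0_def using c(1) by linarith
  then have "ereal r0 < ereal (c/2)" by simp
  then have r0G: "ereal r0 < Gamma (\<lambda>y. f y + phi y) xs" using Gam by (rule less_le_trans)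
  have pts: "\<forall>x\<in>ball xs r0 \<inter> M.
              normal_map Lam f phi (tau Lam f phi x)
                = dirderiv (\<lambda>y. f y + phi y) x (steepest_dir f phi x) *\<^sub>R steepest_dir f phi x
            \<and> dirderiv (\<lambda>y. f y + phi y) x (steepest_dir f phi x) *\<^sub>R steepest_dir f phi x
                = riem_grad (\<lambda>y. f y + phi y) M x"
  proof
    fix x assume x: "x \<in> ball xs r0 \<inter> M"
    then have xK: "x \<in> ball xs rK \<inter> M" and xU: "x \<in> U" and xM: "x \<in> M"
      using rU(2) unfolding r0_def by auto
    obtain w where w: "w \<in> subdiff phi x" "G x + w \<in> aff_dir M" using rK(2) xK by blast
    show "normal_map Lam f phi (tau Lam f phi x)
                = dirderiv (\<lambda>y. f y + phi y) x (steepest_dir f phi x) *\<^sub>R steepest_dir f phi x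
            \<and> dirderiv (\<lambda>y. f y + phi y) x (steepest_dir f phi x) *\<^sub>R steepest_dir f phi x
                = riem_grad (\<lambda>y. f y + phi y) M x"
      by (rule pointwise_main[OF Gd phi_convex Lam_sym Lam_pd affM xM U(1) xU _ U(4) w])
        (use g1 in blast)
  qed
  show ?thesis using r0p r0G pts by blast
qed

end
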